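(* For every basic relation $r$ of Allen's interval algebra, $\{r\}$ supports crisp $r$-constraints.
   Context: Allen's interval algebra has domain $\mathbb{I}=\{[a,b] : a,b\in\mathbb{Q},\ a<b\}$; for $I=[a,b]$ write $I^-=a$, $I^+=b$. Basic relations: $x\,\mathsf{p}\,y$ iff $x^+<y^-$; $x\,\mathsf{m}\,y$ iff $x^+=y^-$; $x\,\mathsf{o}\,y$ iff $x^-<y^-<x^+<y^+$; $x\,\mathsf{d}\,y$ iff $y^-<x^-$ and $x^+<y^+$; $x\,\mathsf{s}\,y$ iff $x^-=y^-$ and $x^+<y^+$; $x\,\mathsf{f}\,y$ iff $x^+=y^+$ and $y^-<x^-$; $x\equiv y$ iff $x=y$; inverses $\mathsf{ri}$ with $x\,\mathsf{ri}\,y$ iff $y\,\mathsf{r}\,x$ (13 relations in total). A language $\Gamma$ supports crisp $r$-constraints if for every $k\in\mathbb{N}$ one can construct a CSP instance $\mathcal{I}_r$ over $\Gamma$ (variables and binary constraints with relations from $\Gamma$) with two distinguished variables $x,y$ such that for every set $X$ of at most $k$ constraints of $\mathcal{I}_r$, the set $\{(\varphi(x),\varphi(y)) : \varphi$ is an assignment of intervals satisfying $\mathcal{I}_r$ with the constraints of $X$ removed$\}$ equals $r$. *)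

theory Defs
  imports Complex_Main
begin

type_synonym interval = "rat \<times> rat"
type_synonym irel = "(interval \<times> interval) set"

definition Ivl :: "interval set" where
  "Ivl = {I. fst I < snd I}"

abbreviation lo :: "interval \<Rightarrow> rat" where "lo I \<equiv> fst I"
abbreviation hi :: "interval \<Rightarrow> rat" where "hi I \<equiv> snd I"

definition allen_rel :: "(interval \<Rightarrow> interval \<Rightarrow> bool) \<Rightarrow> irel" where
  "allen_rel P = {(x, y). x \<in> Ivl \<and> y \<in> Ivl \<and> P x y}"

definition rel_p :: irel where "rel_p = allen_rel (\<lambda>x y. hi x < lo y)"
definition rel_m :: irel where "rel_m = allen_rel (\<lambda>x y. hi x = lo y)"
definition rel_o :: irel where
  "rel_o = allen_rel (\<lambda>x y. lo x < lo y \<and> lo y < hi x \<and> hi x < hi y)"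
definition rel_d :: irel where "rel_d = allen_rel (\<lambda>x y. lo y < lo x \<and> hi x < hi y)"
definition rel_s :: irel where "rel_s = allen_rel (\<lambda>x y. lo x = lo y \<and> hi x < hi y)"
definition rel_f :: irel where "rel_f = allen_rel (\<lambda>x y. hi x = hi y \<and> lo y < lo x)"
definition rel_eq :: irel where "rel_eq = allen_rel (\<lambda>x y. x = y)"

definition allen_basic :: "irel set" where
  "allen_basic = {rel_p, rel_m, rel_o, rel_d, rel_s, rel_f, rel_eq,
                  rel_p\<inverse>, rel_m\<inverse>, rel_o\<inverse>, rel_d\<inverse>, rel_s\<inverse>, rel_f\<inverse>}"

text \<open>A CSP instance over a language: a finite set of variables and a finite
  set of binary constraints (u, R, v) meaning (phi u, phi v) \<in> R.\<close>
type_synonym constr = "nat \<times> irel \<times> nat"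

definition is_instance :: "irel set \<Rightarrow> nat set \<Rightarrow> constr set \<Rightarrow> bool" where
  "is_instance \<Gamma> V C \<longleftrightarrow> finite V \<and> finite C \<and>
     (\<forall>(u, R, v) \<in> C. u \<in> V \<and> v \<in> V \<and> R \<in> \<Gamma>)"

definition satisfies :: "nat set \<Rightarrow> constr set \<Rightarrow> (nat \<Rightarrow> interval) \<Rightarrow> bool" where
  "satisfies V C \<phi> \<longleftrightarrow> (\<forall>v \<in> V. \<phi> v \<in> Ivl) \<and> (\<forall>(u, R, v) \<in> C. (\<phi> u, \<phi> v) \<in> R)"

definition supports_crisp :: "irel set \<Rightarrow> irel \<Rightarrow> bool" where
  "supports_crisp \<Gamma> r \<longleftrightarrow> (\<forall>k::nat. \<exists>V C x y.
     is_instance \<Gamma> V C \<and> x \<in> V \<and> y \<in> V \<and>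
     (\<forall>X. X \<subseteq> C \<longrightarrow> card X \<le> k \<longrightarrow>
        {(\<phi> x, \<phi> y) | \<phi>. satisfies V (C - X) \<phi>} = r))"

end

theory Submission
  imports Defs
begin

definition good :: "irel \<Rightarrow> constr set \<Rightarrow> bool" where
"good r G \<longleftrightarrow> finite G \<and> (\<forall>(u,R,v)\<in>G. R = r \<and> u<4 \<and> v<4 \<and> (2\<le>u \<or> 2\<le>v)) \<and>
 (\<forall>\<phi>. (\<forall>v<4. \<phi> v\<in>Ivl) \<longrightarrow> (\<forall>(u,R,v)\<in>G. (\<phi> u, \<phi> v)\<in>R) \<longrightarrow> (\<phi> 0, \<phi> 1)\<in>r) \<and>
 (\<forall>a b. (a,b)\<in>r \<longrightarrow> (\<exists>\<phi>. \<phi> 0 = a \<and> \<phi> 1 = b \<and> (\<forall>v<4. \<phi> v \<in> Ivl) \<and> (\<forall>(u,R,v)\<in>G. (\<phi> u,\<phi> v)\<in>R)))"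

lemma good_crisp:
  assumes g: "good r G" shows "supports_crisp {r} r"
  unfolding supports_crisp_def
proof
  fix k :: nat
  define ren where "ren i n = (if n < 2 then n else n + 2*i)" for i n :: nat
  define cp where "cp i = (\<lambda>(u,R,v). (ren i u, R, ren i v)) ` G" for i
  define C where "C = (\<Union>i\<le>k. cp i)"
  define V where "V = {..<2*k+4}"
  have fin: "finite G" and Gc: "\<forall>(u,R,v)\<in>G. R = r \<and> u<4 \<and> v<4 \<and> (2\<le>u \<or> 2\<le>v)"
    and GA: "\<forall>\<phi>. (\<forall>v<4. \<phi> v\<in>Ivl) \<longrightarrow> (\<forall>(u,R,v)\<in>G. (\<phi> u, \<phi> v)\<in>R) \<longrightarrow> (\<phi> 0, \<phi> 1)\<in>r"
    and GB: "\<forall>a b. (a,b)\<in>r \<longrightarrow> (\<exists>\<phi>. \<phi> 0 = a \<and> \<phi> 1 = b \<and> (\<forall>v<4. \<phi> v \<in> Ivl) \<and> (\<forall>(u,R,v)\<in>G. (\<phi> u,\<phi> v)\<in>R))"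
    using g unfolding good_def by auto
  have renV: "u < 4 \<Longrightarrow> i \<le> k \<Longrightarrow> ren i u \<in> V" for u i
    unfolding ren_def V_def by auto
  have finC: "finite C" unfolding C_def cp_def using fin by auto
  have inst: "is_instance {r} V C"
    unfolding is_instance_def
  proof (intro conjI)
    show "finite V" unfolding V_def by simp
    show "finite C" by (rule finC)
    show "\<forall>(u, R, v)\<in>C. u \<in> V \<and> v \<in> V \<and> R \<in> {r}"
      unfolding C_def cp_def using Gc renV by fastforce
  qed
  have disj: "i = j" if ci: "c \<in> cp i" and cj: "c \<in> cp j" for c i j
  proof -
    obtain u R v where uRv: "(u,R,v) \<in> G" "c = (ren i u, R, ren i v)" using ci unfolding cp_def by auto
    obtain u' R' v' where uRv': "(u',R',v') \<in> G" "c = (ren j u', R', ren j v')" using cj unfolding cp_def by auto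
    have e1: "ren i u = ren j u'" "ren i v = ren j v'" using uRv(2) uRv'(2) by auto
    have "u<4 \<and> v<4 \<and> (2\<le>u \<or> 2\<le>v)" "u'<4 \<and> v'<4" using Gc uRv(1) uRv'(1) by auto
    then have h: "u<4" "v<4" "2\<le>u \<or> 2\<le>v" "u'<4" "v'<4" by auto
    have "(if u < 2 then u else u + 2*i) = (if u' < 2 then u' else u' + 2*j)"
         "(if v < 2 then v else v + 2*i) = (if v' < 2 then v' else v' + 2*j)"
      using e1 unfolding ren_def by auto
    then show ?thesis using h by (cases "u < 2"; cases "u' < 2"; cases "v < 2"; cases "v' < 2"; simp; presburger)
  qed
  show "\<exists>V C x y. is_instance {r} V C \<and> x \<in> V \<and> y \<in> V \<and>
     (\<forall>X. X \<subseteq> C \<longrightarrow> card X \<le> k \<longrightarrow>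
        {(\<phi> x, \<phi> y) | \<phi>. satisfies V (C - X) \<phi>} = r)"
  proof (intro exI conjI allI impI)
    show "is_instance {r} V C" by (rule inst)
    show "0 \<in> V" "1 \<in> V" unfolding V_def by auto
    fix X assume X: "X \<subseteq> C" "card X \<le> k"
    show "{(\<phi> 0, \<phi> 1) | \<phi>. satisfies V (C - X) \<phi>} = r"
    proof (intro equalityI subsetI)
      fix pq assume "pq \<in> {(\<phi> 0, \<phi> 1) | \<phi>. satisfies V (C - X) \<phi>}"
      then obtain \<phi> where pq: "pq = (\<phi> 0, \<phi> 1)" and sat: "satisfies V (C-X) \<phi>" by auto
      have "\<exists>i\<le>k. cp i \<inter> X = {}"
      proof (rule ccontr)
        assume "\<not> ?thesis"
        then have "\<forall>i\<in>{..k}. \<exists>c. c \<in> cp i \<inter> X" by auto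
        then have "\<exists>f. \<forall>i\<in>{..k}. f i \<in> cp i \<inter> X" by (rule bchoice)
        then obtain f where f: "\<forall>i\<in>{..k}. f i \<in> cp i \<inter> X" by blast
        have "inj_on f {..k}" unfolding inj_on_def
        proof (intro ballI impI)
          fix i j assume ij: "i \<in> {..k}" "j \<in> {..k}" "f i = f j"
          have "f i \<in> cp i" using f ij(1) by blast
          moreover have "f j \<in> cp j" using f ij(2) by blast
          ultimately have "f i \<in> cp i" "f i \<in> cp j" using ij(3) by simp_all
          then show "i = j" by (rule disj)
        qed
        hence "card (f ` {..k}) = k+1" by (simp add: card_image)
        moreover have "f ` {..k} \<subseteq> X" using f by auto
        moreover have "finite X" using X(1) finC finite_subset by auto
        ultimately have "k+1 \<le> card X" by (metis card_mono)
        with X(2) show False by simp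
      qed
      then obtain i where i: "i \<le> k" "cp i \<inter> X = {}" by auto
      define \<psi> where "\<psi> n = \<phi> (ren i n)" for n
      have "(\<psi> 0, \<psi> 1) \<in> r"
      proof -
        have A1: "\<psi> v \<in> Ivl" if "v < 4" for v
          using sat renV[OF that i(1)] unfolding satisfies_def \<psi>_def by auto
        have "(\<psi> u, \<psi> v) \<in> R" if uRv: "(u,R,v) \<in> G" for u R v
        proof -
          from uRv have "(ren i u, R, ren i v) \<in> cp i" unfolding cp_def by force
          then have "(ren i u, R, ren i v) \<in> C - X" using i unfolding C_def by auto
          moreover have "\<forall>c\<in>C - X. case c of (u, R, v) \<Rightarrow> (\<phi> u, \<phi> v) \<in> R"
            using sat unfolding satisfies_def by blast
          ultimately have "case (ren i u, R, ren i v) of (u, R, v) \<Rightarrow> (\<phi> u, \<phi> v) \<in> R" by blast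
          then show "(\<psi> u, \<psi> v) \<in> R" unfolding \<psi>_def by simp
        qed
        then have "\<forall>(u,R,v)\<in>G. (\<psi> u, \<psi> v) \<in> R" by auto
        then show ?thesis using GA A1 by blast
      qed
      moreover have "\<psi> 0 = \<phi> 0" "\<psi> 1 = \<phi> 1" unfolding \<psi>_def ren_def by auto
      ultimately show "pq \<in> r" using pq by simp
    next
      fix pq assume "pq \<in> r"
      then obtain a b where ab: "pq = (a,b)" "(a,b) \<in> r" by (cases pq) auto
      from GB ab(2) obtain \<phi> where \<phi>: "\<phi> 0 = a" "\<phi> 1 = b" "\<forall>v<4. \<phi> v \<in> Ivl"
        "\<forall>(u,R,v)\<in>G. (\<phi> u,\<phi> v)\<in>R" by blast
      define \<Phi> where "\<Phi> n = \<phi> (if n < 2 then n else 2 + n mod 2)" for n :: nat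
      have key: "\<Phi> (ren i u) = \<phi> u" if "u < 4" for u i
      proof (cases "u < 2")
        case True then show ?thesis unfolding \<Phi>_def ren_def by simp
      next
        case False
        then have "2 + (u + 2*i) mod 2 = u" using that by presburger
        then show ?thesis using False unfolding \<Phi>_def ren_def by simp
      qed
      have "satisfies V (C - X) \<Phi>"
        unfolding satisfies_def
      proof (intro conjI ballI)
        fix v assume "v \<in> V"
        have "(if v < 2 then v else 2 + v mod 2) < 4" by auto
        then show "\<Phi> v \<in> Ivl" using \<phi>(3) unfolding \<Phi>_def by blast
      next
        fix c assume "c \<in> C - X"
        then obtain i u R v where "(u,R,v) \<in> G" "c = (ren i u, R, ren i v)"
          unfolding C_def cp_def by auto
        moreover then have "u < 4" "v < 4" using Gc by auto
        ultimately show "case c of (u, R, v) \<Rightarrow> (\<Phi> u, \<Phi> v) \<in> R" using key \<phi>(4) by auto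
      qed
      moreover have "\<Phi> 0 = a" "\<Phi> 1 = b" using \<phi> unfolding \<Phi>_def by auto
      ultimately show "pq \<in> {(\<phi> 0, \<phi> 1) | \<phi>. satisfies V (C - X) \<phi>}" using ab by force
    qed
  qed
qed

lemma good_p: "good (rel_p) {(0,(rel_p),2),(2,(rel_p),1)}"
  unfolding good_def
proof (intro conjI allI impI)
  fix \<phi> :: "nat \<Rightarrow> interval"
  assume h: "\<forall>v<4. \<phi> v \<in> Ivl" "\<forall>(u,R,v)\<in>{(0,(rel_p),2),(2,(rel_p),1)}. (\<phi> u, \<phi> v) \<in> R"
  have "\<phi> 0 \<in> Ivl" "\<phi> 1 \<in> Ivl" "\<phi> 2 \<in> Ivl" "\<phi> 3 \<in> Ivl" using h(1) by auto
  then show "(\<phi> 0, \<phi> 1) \<in> rel_p" using h(2)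
    by (auto simp: rel_p_def rel_m_def rel_o_def rel_d_def rel_s_def rel_f_def rel_eq_def allen_rel_def Ivl_def)
next
  fix a b assume h: "(a,b) \<in> rel_p"
  show "\<exists>\<phi>::nat\<Rightarrow>interval. \<phi> 0 = a \<and> \<phi> 1 = b \<and> (\<forall>v<4. \<phi> v \<in> Ivl) \<and> (\<forall>(u,R,v)\<in>{(0,(rel_p),2),(2,(rel_p),1)}. (\<phi> u,\<phi> v)\<in>R)"
    apply (rule exI[of _ "\<lambda>n::nat. if n=0 then a else if n=1 then b else if n=2 then (snd a + (fst b - snd a)/3, snd a + 2*(fst b - snd a)/3) else a"])
    using h by (auto simp: rel_p_def rel_m_def rel_o_def rel_d_def rel_s_def rel_f_def rel_eq_def allen_rel_def Ivl_def less_Suc_eq numeral_eq_Suc; (simp add: field_simps)?)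
qed simp_all

lemma good_p_inv: "good (rel_p\<inverse>) {(2,(rel_p\<inverse>),1),(0,(rel_p\<inverse>),2)}"
  unfolding good_def
proof (intro conjI allI impI)
  fix \<phi> :: "nat \<Rightarrow> interval"
  assume h: "\<forall>v<4. \<phi> v \<in> Ivl" "\<forall>(u,R,v)\<in>{(2,(rel_p\<inverse>),1),(0,(rel_p\<inverse>),2)}. (\<phi> u, \<phi> v) \<in> R"
  have "\<phi> 0 \<in> Ivl" "\<phi> 1 \<in> Ivl" "\<phi> 2 \<in> Ivl" "\<phi> 3 \<in> Ivl" using h(1) by auto
  then show "(\<phi> 0, \<phi> 1) \<in> rel_p\<inverse>" using h(2)
    by (auto simp: rel_p_def rel_m_def rel_o_def rel_d_def rel_s_def rel_f_def rel_eq_def allen_rel_def Ivl_def)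
next
  fix a b assume h: "(a,b) \<in> rel_p\<inverse>"
  show "\<exists>\<phi>::nat\<Rightarrow>interval. \<phi> 0 = a \<and> \<phi> 1 = b \<and> (\<forall>v<4. \<phi> v \<in> Ivl) \<and> (\<forall>(u,R,v)\<in>{(2,(rel_p\<inverse>),1),(0,(rel_p\<inverse>),2)}. (\<phi> u,\<phi> v)\<in>R)"
    apply (rule exI[of _ "\<lambda>n::nat. if n=0 then a else if n=1 then b else if n=2 then (snd b + (fst a - snd b)/3, snd b + 2*(fst a - snd b)/3) else b"])
    using h by (auto simp: rel_p_def rel_m_def rel_o_def rel_d_def rel_s_def rel_f_def rel_eq_def allen_rel_def Ivl_def less_Suc_eq numeral_eq_Suc; (simp add: field_simps)?)
qed simp_all

lemma good_m: "good (rel_m) {(0,(rel_m),2),(3,(rel_m),2),(3,(rel_m),1)}"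
  unfolding good_def
proof (intro conjI allI impI)
  fix \<phi> :: "nat \<Rightarrow> interval"
  assume h: "\<forall>v<4. \<phi> v \<in> Ivl" "\<forall>(u,R,v)\<in>{(0,(rel_m),2),(3,(rel_m),2),(3,(rel_m),1)}. (\<phi> u, \<phi> v) \<in> R"
  have "\<phi> 0 \<in> Ivl" "\<phi> 1 \<in> Ivl" "\<phi> 2 \<in> Ivl" "\<phi> 3 \<in> Ivl" using h(1) by auto
  then show "(\<phi> 0, \<phi> 1) \<in> rel_m" using h(2)
    by (auto simp: rel_p_def rel_m_def rel_o_def rel_d_def rel_s_def rel_f_def rel_eq_def allen_rel_def Ivl_def)
next
  fix a b assume h: "(a,b) \<in> rel_m"
  show "\<exists>\<phi>::nat\<Rightarrow>interval. \<phi> 0 = a \<and> \<phi> 1 = b \<and> (\<forall>v<4. \<phi> v \<in> Ivl) \<and> (\<forall>(u,R,v)\<in>{(0,(rel_m),2),(3,(rel_m),2),(3,(rel_m),1)}. (\<phi> u,\<phi> v)\<in>R)"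
    apply (rule exI[of _ "\<lambda>n::nat. if n=0 then a else if n=1 then b else if n=2 then (snd a, snd a + 1) else (snd a - 1, snd a)"])
    using h by (auto simp: rel_p_def rel_m_def rel_o_def rel_d_def rel_s_def rel_f_def rel_eq_def allen_rel_def Ivl_def less_Suc_eq numeral_eq_Suc; (simp add: field_simps)?)
qed simp_all

lemma good_m_inv: "good (rel_m\<inverse>) {(2,(rel_m\<inverse>),1),(2,(rel_m\<inverse>),3),(0,(rel_m\<inverse>),3)}"
  unfolding good_def
proof (intro conjI allI impI)
  fix \<phi> :: "nat \<Rightarrow> interval"
  assume h: "\<forall>v<4. \<phi> v \<in> Ivl" "\<forall>(u,R,v)\<in>{(2,(rel_m\<inverse>),1),(2,(rel_m\<inverse>),3),(0,(rel_m\<inverse>),3)}. (\<phi> u, \<phi> v) \<in> R"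
  have "\<phi> 0 \<in> Ivl" "\<phi> 1 \<in> Ivl" "\<phi> 2 \<in> Ivl" "\<phi> 3 \<in> Ivl" using h(1) by auto
  then show "(\<phi> 0, \<phi> 1) \<in> rel_m\<inverse>" using h(2)
    by (auto simp: rel_p_def rel_m_def rel_o_def rel_d_def rel_s_def rel_f_def rel_eq_def allen_rel_def Ivl_def)
next
  fix a b assume h: "(a,b) \<in> rel_m\<inverse>"
  show "\<exists>\<phi>::nat\<Rightarrow>interval. \<phi> 0 = a \<and> \<phi> 1 = b \<and> (\<forall>v<4. \<phi> v \<in> Ivl) \<and> (\<forall>(u,R,v)\<in>{(2,(rel_m\<inverse>),1),(2,(rel_m\<inverse>),3),(0,(rel_m\<inverse>),3)}. (\<phi> u,\<phi> v)\<in>R)"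
    apply (rule exI[of _ "\<lambda>n::nat. if n=0 then a else if n=1 then b else if n=2 then (snd b, snd b + 1) else (snd b - 1, snd b)"])
    using h by (auto simp: rel_p_def rel_m_def rel_o_def rel_d_def rel_s_def rel_f_def rel_eq_def allen_rel_def Ivl_def less_Suc_eq numeral_eq_Suc; (simp add: field_simps)?)
qed simp_all

lemma good_o: "good (rel_o) {(0,(rel_o),2),(2,(rel_o),1),(0,(rel_o),3),(1,(rel_o),3)}"
  unfolding good_def
proof (intro conjI allI impI)
  fix \<phi> :: "nat \<Rightarrow> interval"
  assume h: "\<forall>v<4. \<phi> v \<in> Ivl" "\<forall>(u,R,v)\<in>{(0,(rel_o),2),(2,(rel_o),1),(0,(rel_o),3),(1,(rel_o),3)}. (\<phi> u, \<phi> v) \<in> R"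
  have "\<phi> 0 \<in> Ivl" "\<phi> 1 \<in> Ivl" "\<phi> 2 \<in> Ivl" "\<phi> 3 \<in> Ivl" using h(1) by auto
  then show "(\<phi> 0, \<phi> 1) \<in> rel_o" using h(2)
    by (auto simp: rel_p_def rel_m_def rel_o_def rel_d_def rel_s_def rel_f_def rel_eq_def allen_rel_def Ivl_def)
next
  fix a b assume h: "(a,b) \<in> rel_o"
  show "\<exists>\<phi>::nat\<Rightarrow>interval. \<phi> 0 = a \<and> \<phi> 1 = b \<and> (\<forall>v<4. \<phi> v \<in> Ivl) \<and> (\<forall>(u,R,v)\<in>{(0,(rel_o),2),(2,(rel_o),1),(0,(rel_o),3),(1,(rel_o),3)}. (\<phi> u,\<phi> v)\<in>R)"
    apply (rule exI[of _ "\<lambda>n::nat. if n=0 then a else if n=1 then b else if n=2 then ((fst a + fst b)/2, (snd a + snd b)/2) else ((fst b + snd a)/2, snd b + 1)"])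
    using h by (auto simp: rel_p_def rel_m_def rel_o_def rel_d_def rel_s_def rel_f_def rel_eq_def allen_rel_def Ivl_def less_Suc_eq numeral_eq_Suc; (simp add: field_simps)?)
qed simp_all

lemma good_o_inv: "good (rel_o\<inverse>) {(2,(rel_o\<inverse>),1),(0,(rel_o\<inverse>),2),(3,(rel_o\<inverse>),1),(3,(rel_o\<inverse>),0)}"
  unfolding good_def
proof (intro conjI allI impI)
  fix \<phi> :: "nat \<Rightarrow> interval"
  assume h: "\<forall>v<4. \<phi> v \<in> Ivl" "\<forall>(u,R,v)\<in>{(2,(rel_o\<inverse>),1),(0,(rel_o\<inverse>),2),(3,(rel_o\<inverse>),1),(3,(rel_o\<inverse>),0)}. (\<phi> u, \<phi> v) \<in> R"
  have "\<phi> 0 \<in> Ivl" "\<phi> 1 \<in> Ivl" "\<phi> 2 \<in> Ivl" "\<phi> 3 \<in> Ivl" using h(1) by auto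
  then show "(\<phi> 0, \<phi> 1) \<in> rel_o\<inverse>" using h(2)
    by (auto simp: rel_p_def rel_m_def rel_o_def rel_d_def rel_s_def rel_f_def rel_eq_def allen_rel_def Ivl_def)
next
  fix a b assume h: "(a,b) \<in> rel_o\<inverse>"
  show "\<exists>\<phi>::nat\<Rightarrow>interval. \<phi> 0 = a \<and> \<phi> 1 = b \<and> (\<forall>v<4. \<phi> v \<in> Ivl) \<and> (\<forall>(u,R,v)\<in>{(2,(rel_o\<inverse>),1),(0,(rel_o\<inverse>),2),(3,(rel_o\<inverse>),1),(3,(rel_o\<inverse>),0)}. (\<phi> u,\<phi> v)\<in>R)"
    apply (rule exI[of _ "\<lambda>n::nat. if n=0 then a else if n=1 then b else if n=2 then ((fst b + fst a)/2, (snd b + snd a)/2) else ((fst a + snd b)/2, snd a + 1)"])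
    using h by (auto simp: rel_p_def rel_m_def rel_o_def rel_d_def rel_s_def rel_f_def rel_eq_def allen_rel_def Ivl_def less_Suc_eq numeral_eq_Suc; (simp add: field_simps)?)
qed simp_all

lemma good_d: "good (rel_d) {(0,(rel_d),2),(2,(rel_d),1)}"
  unfolding good_def
proof (intro conjI allI impI)
  fix \<phi> :: "nat \<Rightarrow> interval"
  assume h: "\<forall>v<4. \<phi> v \<in> Ivl" "\<forall>(u,R,v)\<in>{(0,(rel_d),2),(2,(rel_d),1)}. (\<phi> u, \<phi> v) \<in> R"
  have "\<phi> 0 \<in> Ivl" "\<phi> 1 \<in> Ivl" "\<phi> 2 \<in> Ivl" "\<phi> 3 \<in> Ivl" using h(1) by auto
  then show "(\<phi> 0, \<phi> 1) \<in> rel_d" using h(2)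
    by (auto simp: rel_p_def rel_m_def rel_o_def rel_d_def rel_s_def rel_f_def rel_eq_def allen_rel_def Ivl_def)
next
  fix a b assume h: "(a,b) \<in> rel_d"
  show "\<exists>\<phi>::nat\<Rightarrow>interval. \<phi> 0 = a \<and> \<phi> 1 = b \<and> (\<forall>v<4. \<phi> v \<in> Ivl) \<and> (\<forall>(u,R,v)\<in>{(0,(rel_d),2),(2,(rel_d),1)}. (\<phi> u,\<phi> v)\<in>R)"
    apply (rule exI[of _ "\<lambda>n::nat. if n=0 then a else if n=1 then b else if n=2 then ((fst a + fst b)/2, (snd a + snd b)/2) else a"])
    using h by (auto simp: rel_p_def rel_m_def rel_o_def rel_d_def rel_s_def rel_f_def rel_eq_def allen_rel_def Ivl_def less_Suc_eq numeral_eq_Suc; (simp add: field_simps)?)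
qed simp_all

lemma good_d_inv: "good (rel_d\<inverse>) {(2,(rel_d\<inverse>),1),(0,(rel_d\<inverse>),2)}"
  unfolding good_def
proof (intro conjI allI impI)
  fix \<phi> :: "nat \<Rightarrow> interval"
  assume h: "\<forall>v<4. \<phi> v \<in> Ivl" "\<forall>(u,R,v)\<in>{(2,(rel_d\<inverse>),1),(0,(rel_d\<inverse>),2)}. (\<phi> u, \<phi> v) \<in> R"
  have "\<phi> 0 \<in> Ivl" "\<phi> 1 \<in> Ivl" "\<phi> 2 \<in> Ivl" "\<phi> 3 \<in> Ivl" using h(1) by auto
  then show "(\<phi> 0, \<phi> 1) \<in> rel_d\<inverse>" using h(2)
    by (auto simp: rel_p_def rel_m_def rel_o_def rel_d_def rel_s_def rel_f_def rel_eq_def allen_rel_def Ivl_def)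
next
  fix a b assume h: "(a,b) \<in> rel_d\<inverse>"
  show "\<exists>\<phi>::nat\<Rightarrow>interval. \<phi> 0 = a \<and> \<phi> 1 = b \<and> (\<forall>v<4. \<phi> v \<in> Ivl) \<and> (\<forall>(u,R,v)\<in>{(2,(rel_d\<inverse>),1),(0,(rel_d\<inverse>),2)}. (\<phi> u,\<phi> v)\<in>R)"
    apply (rule exI[of _ "\<lambda>n::nat. if n=0 then a else if n=1 then b else if n=2 then ((fst b + fst a)/2, (snd b + snd a)/2) else b"])
    using h by (auto simp: rel_p_def rel_m_def rel_o_def rel_d_def rel_s_def rel_f_def rel_eq_def allen_rel_def Ivl_def less_Suc_eq numeral_eq_Suc; (simp add: field_simps)?)
qed simp_all

lemma good_s: "good (rel_s) {(0,(rel_s),2),(2,(rel_s),1)}"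
  unfolding good_def
proof (intro conjI allI impI)
  fix \<phi> :: "nat \<Rightarrow> interval"
  assume h: "\<forall>v<4. \<phi> v \<in> Ivl" "\<forall>(u,R,v)\<in>{(0,(rel_s),2),(2,(rel_s),1)}. (\<phi> u, \<phi> v) \<in> R"
  have "\<phi> 0 \<in> Ivl" "\<phi> 1 \<in> Ivl" "\<phi> 2 \<in> Ivl" "\<phi> 3 \<in> Ivl" using h(1) by auto
  then show "(\<phi> 0, \<phi> 1) \<in> rel_s" using h(2)
    by (auto simp: rel_p_def rel_m_def rel_o_def rel_d_def rel_s_def rel_f_def rel_eq_def allen_rel_def Ivl_def)
next
  fix a b assume h: "(a,b) \<in> rel_s"
  show "\<exists>\<phi>::nat\<Rightarrow>interval. \<phi> 0 = a \<and> \<phi> 1 = b \<and> (\<forall>v<4. \<phi> v \<in> Ivl) \<and> (\<forall>(u,R,v)\<in>{(0,(rel_s),2),(2,(rel_s),1)}. (\<phi> u,\<phi> v)\<in>R)"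
    apply (rule exI[of _ "\<lambda>n::nat. if n=0 then a else if n=1 then b else if n=2 then (fst a, (snd a + snd b)/2) else a"])
    using h by (auto simp: rel_p_def rel_m_def rel_o_def rel_d_def rel_s_def rel_f_def rel_eq_def allen_rel_def Ivl_def less_Suc_eq numeral_eq_Suc; (simp add: field_simps)?)
qed simp_all

lemma good_s_inv: "good (rel_s\<inverse>) {(2,(rel_s\<inverse>),1),(0,(rel_s\<inverse>),2)}"
  unfolding good_def
proof (intro conjI allI impI)
  fix \<phi> :: "nat \<Rightarrow> interval"
  assume h: "\<forall>v<4. \<phi> v \<in> Ivl" "\<forall>(u,R,v)\<in>{(2,(rel_s\<inverse>),1),(0,(rel_s\<inverse>),2)}. (\<phi> u, \<phi> v) \<in> R"
  have "\<phi> 0 \<in> Ivl" "\<phi> 1 \<in> Ivl" "\<phi> 2 \<in> Ivl" "\<phi> 3 \<in> Ivl" using h(1) by auto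
  then show "(\<phi> 0, \<phi> 1) \<in> rel_s\<inverse>" using h(2)
    by (auto simp: rel_p_def rel_m_def rel_o_def rel_d_def rel_s_def rel_f_def rel_eq_def allen_rel_def Ivl_def)
next
  fix a b assume h: "(a,b) \<in> rel_s\<inverse>"
  show "\<exists>\<phi>::nat\<Rightarrow>interval. \<phi> 0 = a \<and> \<phi> 1 = b \<and> (\<forall>v<4. \<phi> v \<in> Ivl) \<and> (\<forall>(u,R,v)\<in>{(2,(rel_s\<inverse>),1),(0,(rel_s\<inverse>),2)}. (\<phi> u,\<phi> v)\<in>R)"
    apply (rule exI[of _ "\<lambda>n::nat. if n=0 then a else if n=1 then b else if n=2 then (fst b, (snd b + snd a)/2) else b"])
    using h by (auto simp: rel_p_def rel_m_def rel_o_def rel_d_def rel_s_def rel_f_def rel_eq_def allen_rel_def Ivl_def less_Suc_eq numeral_eq_Suc; (simp add: field_simps)?)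
qed simp_all

lemma good_f: "good (rel_f) {(0,(rel_f),2),(2,(rel_f),1)}"
  unfolding good_def
proof (intro conjI allI impI)
  fix \<phi> :: "nat \<Rightarrow> interval"
  assume h: "\<forall>v<4. \<phi> v \<in> Ivl" "\<forall>(u,R,v)\<in>{(0,(rel_f),2),(2,(rel_f),1)}. (\<phi> u, \<phi> v) \<in> R"
  have "\<phi> 0 \<in> Ivl" "\<phi> 1 \<in> Ivl" "\<phi> 2 \<in> Ivl" "\<phi> 3 \<in> Ivl" using h(1) by auto
  then show "(\<phi> 0, \<phi> 1) \<in> rel_f" using h(2)
    by (auto simp: rel_p_def rel_m_def rel_o_def rel_d_def rel_s_def rel_f_def rel_eq_def allen_rel_def Ivl_def)
next
  fix a b assume h: "(a,b) \<in> rel_f"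
  show "\<exists>\<phi>::nat\<Rightarrow>interval. \<phi> 0 = a \<and> \<phi> 1 = b \<and> (\<forall>v<4. \<phi> v \<in> Ivl) \<and> (\<forall>(u,R,v)\<in>{(0,(rel_f),2),(2,(rel_f),1)}. (\<phi> u,\<phi> v)\<in>R)"
    apply (rule exI[of _ "\<lambda>n::nat. if n=0 then a else if n=1 then b else if n=2 then ((fst a + fst b)/2, snd a) else a"])
    using h by (auto simp: rel_p_def rel_m_def rel_o_def rel_d_def rel_s_def rel_f_def rel_eq_def allen_rel_def Ivl_def less_Suc_eq numeral_eq_Suc; (simp add: field_simps)?)
qed simp_all

lemma good_f_inv: "good (rel_f\<inverse>) {(2,(rel_f\<inverse>),1),(0,(rel_f\<inverse>),2)}"
  unfolding good_def
proof (intro conjI allI impI)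
  fix \<phi> :: "nat \<Rightarrow> interval"
  assume h: "\<forall>v<4. \<phi> v \<in> Ivl" "\<forall>(u,R,v)\<in>{(2,(rel_f\<inverse>),1),(0,(rel_f\<inverse>),2)}. (\<phi> u, \<phi> v) \<in> R"
  have "\<phi> 0 \<in> Ivl" "\<phi> 1 \<in> Ivl" "\<phi> 2 \<in> Ivl" "\<phi> 3 \<in> Ivl" using h(1) by auto
  then show "(\<phi> 0, \<phi> 1) \<in> rel_f\<inverse>" using h(2)
    by (auto simp: rel_p_def rel_m_def rel_o_def rel_d_def rel_s_def rel_f_def rel_eq_def allen_rel_def Ivl_def)
next
  fix a b assume h: "(a,b) \<in> rel_f\<inverse>"
  show "\<exists>\<phi>::nat\<Rightarrow>interval. \<phi> 0 = a \<and> \<phi> 1 = b \<and> (\<forall>v<4. \<phi> v \<in> Ivl) \<and> (\<forall>(u,R,v)\<in>{(2,(rel_f\<inverse>),1),(0,(rel_f\<inverse>),2)}. (\<phi> u,\<phi> v)\<in>R)"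
    apply (rule exI[of _ "\<lambda>n::nat. if n=0 then a else if n=1 then b else if n=2 then ((fst b + fst a)/2, snd b) else b"])
    using h by (auto simp: rel_p_def rel_m_def rel_o_def rel_d_def rel_s_def rel_f_def rel_eq_def allen_rel_def Ivl_def less_Suc_eq numeral_eq_Suc; (simp add: field_simps)?)
qed simp_all

lemma good_eq: "good (rel_eq) {(0,(rel_eq),2),(2,(rel_eq),1)}"
  unfolding good_def
proof (intro conjI allI impI)
  fix \<phi> :: "nat \<Rightarrow> interval"
  assume h: "\<forall>v<4. \<phi> v \<in> Ivl" "\<forall>(u,R,v)\<in>{(0,(rel_eq),2),(2,(rel_eq),1)}. (\<phi> u, \<phi> v) \<in> R"
  have "\<phi> 0 \<in> Ivl" "\<phi> 1 \<in> Ivl" "\<phi> 2 \<in> Ivl" "\<phi> 3 \<in> Ivl" using h(1) by auto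
  then show "(\<phi> 0, \<phi> 1) \<in> rel_eq" using h(2)
    by (auto simp: rel_p_def rel_m_def rel_o_def rel_d_def rel_s_def rel_f_def rel_eq_def allen_rel_def Ivl_def)
next
  fix a b assume h: "(a,b) \<in> rel_eq"
  show "\<exists>\<phi>::nat\<Rightarrow>interval. \<phi> 0 = a \<and> \<phi> 1 = b \<and> (\<forall>v<4. \<phi> v \<in> Ivl) \<and> (\<forall>(u,R,v)\<in>{(0,(rel_eq),2),(2,(rel_eq),1)}. (\<phi> u,\<phi> v)\<in>R)"
    apply (rule exI[of _ "\<lambda>n::nat. if n=0 then a else if n=1 then b else if n=2 then a else a"])
    using h by (auto simp: rel_p_def rel_m_def rel_o_def rel_d_def rel_s_def rel_f_def rel_eq_def allen_rel_def Ivl_def less_Suc_eq numeral_eq_Suc; (simp add: field_simps)?)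
qed simp_all

theorem mainTheorem8:
  assumes "r \<in> allen_basic"
  shows "supports_crisp {r} r"
  using assms unfolding allen_basic_def
  using good_crisp[OF good_p] good_crisp[OF good_p_inv] good_crisp[OF good_m] good_crisp[OF good_m_inv] good_crisp[OF good_o] good_crisp[OF good_o_inv] good_crisp[OF good_d] good_crisp[OF good_d_inv] good_crisp[OF good_s] good_crisp[OF good_s_inv] good_crisp[OF good_f] good_crisp[OF good_f_inv] good_crisp[OF good_eq] by blast

end
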